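(* Let the Algorithm and assumptions (A1)–(A4) be as in the context, with constants $L_H,K_H,\delta_g,\delta_H,\nu$, assume $\sigma_0\le2\gamma L_H$, assume $f$ attains its minimum over $\mathcal M$, and suppose that for every iteration $k$, $\delta_g\le\frac{9\delta_H^2}{4\sigma_k}$ and \[ \delta_H\le\min\Big\{\min\{\tfrac1{18},\tfrac{1-\rho_{TH}}{9}\}\big(\sqrt{K_H^2+4\sigma_k\varepsilon_g}-K_H\big),\ \min\{\tfrac19,\tfrac{2(1-\rho_{TH})}{9}\}\nu\varepsilon_H\Big\}. \] Then the Algorithm terminates after at most $\mathcal O(\max\{\varepsilon_g^{-2},\varepsilon_H^{-3}\})$ iterations.
   Context: Let $\mathcal M$ be a connected complete Riemannian manifold; $\langle\cdot,\cdot\rangle$ and $\|\cdot\|$ denote the inner product and norm on tangent spaces $T_x\mathcal M$. Let $f=\frac1n\sum_{i=1}^n f_i$ with each $f_i:\mathcal M\to\mathbb R$ twice continuously differentiable; $\mathrm{grad} f$ is the Riemannian gradient. A retraction is a smooth map $R:T\mathcal M\to\mathcal M$ whose restriction $R_x$ to $T_x\mathcal M$ satisfies $R_x(0_x)=x$, $DR_x(0_x)=\mathrm{Id}$. $\nabla^2 f\circ R_x(0_x)$ is the Hessian at $0_x$ of $f\circ R_x$ on the inner-product space $T_x\mathcal M$. $\lambda_{\min}(H)$ denotes the smallest eigenvalue of a self-adjoint operator $H$. Algorithm: fix $\varepsilon_g,\varepsilon_H,\rho_{TH}\in(0,1)$, $\gamma>1$, $x_0\in\mathcal M$, $\sigma_0>0$.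 At iteration $k$: construct $G_k\in T_{x_k}\mathcal M$ and self-adjoint linear $H_k$ on $T_{x_k}\mathcal M$; if $\|G_k\|\le\varepsilon_g$ and $\lambda_{\min}(H_k)\ge-\varepsilon_H$, stop and return $x_k$; otherwise choose $\eta_k\in T_{x_k}\mathcal M$ approximately minimizing $m_k(\eta):=\langle G_k,\eta\rangle+\frac12\langle H_k[\eta],\eta\rangle+\frac13\sigma_k\|\eta\|^3$, set $\rho_k=\frac{f(x_k)-f\circ R_{x_k}(\eta_k)}{-m_k(\eta_k)}$; if $\rho_k\ge\rho_{TH}$ set $x_{k+1}=R_{x_k}(\eta_k)$, $\sigma_{k+1}=\sigma_k/\gamma$, else $x_{k+1}=x_k$, $\sigma_{k+1}=\gamma\sigma_k$. Cauchy point and eigenpoint: $\eta_k^C:=-\alpha^C G_k$ with $\alpha^C\in\arg\min_{\alpha\ge0}m_k(-\alpha G_k)$. Fix $\nu\in(0,1)$. When $\lambda_{\min}(H_k)<0$, $\eta_k^E:=\alpha^E u_k$ where $u_k$ satisfies $\langle u_k,H_k[u_k]\rangle\le\nu\lambda_{\min}(H_k)\|u_k\|^2<0$ and $\langle G_k,u_k\rangle\le0$, and $\alpha^E\in\arg\min_{\alpha\ge0}m_k(\alpha u_k)$. Assumptions: (A1) there is $L_H>0$ with $\big|f\circ R_{x_k}(\eta_k)-f(x_k)-\langle\mathrm{grad} f(x_k),\eta_k\rangle-\frac12\langle\nabla^2 f\circ R_{x_k}(0_{x_k})[\eta_k],\eta_k\rangle\big|\le\frac12L_H\|\eta_k\|^3$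 for all $k$. (A2) there is $K_H>0$ with $\|H_k\|:=\sup_{\|\eta\|\le1}\langle\eta,H_k[\eta]\rangle\le K_H$ for all $k$. (A3) there are $\delta_g,\delta_H\in(0,1)$ with $\|G_k-\mathrm{grad} f(x_k)\|\le\delta_g$ and $\|(H_k-\nabla^2 f\circ R_{x_k}(0_{x_k}))[\eta_k]\|\le\delta_H\|\eta_k\|$ for all $k$. (A4) for all $k$, $-m_k(\eta_k)\ge-m_k(\eta_k^C)$, and $-m_k(\eta_k)\ge-m_k(\eta_k^E)$ whenever $\lambda_{\min}(H_k)<0$. The constant in $\mathcal O(\cdot)$ is independent of $\varepsilon_g,\varepsilon_H$ (it may depend on $f(x_0)-\min f$, $\rho_{TH},\nu,\gamma,L_H,K_H,\sigma_0$). *)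

theory Defs
  imports "HOL-Analysis.Analysis"
begin

text \<open>Points of the manifold form a type 'm;
  every tangent space T_x M is identified (by a chosen linear isometry) with one fixed
  finite-dimensional real inner product space 'v.  A retraction is a map
  R :: 'm => 'v => 'm with R x 0 = x.  Because DR_x(0) = Id, the Riemannian gradient of f
  at x is the Euclidean gradient at 0 of the pullback f o R_x, and the operator
  nabla^2 (f o R_x)(0_x) is the Euclidean Hessian at 0 of the pullback.\<close>

definition egrad :: "('v::euclidean_space \<Rightarrow> real) \<Rightarrow> 'v \<Rightarrow> 'v" where
  "egrad \<phi> y = (\<Sum>b\<in>Basis. frechet_derivative \<phi> (at y) b *\<^sub>R b)"

definition ehess :: "('v::euclidean_space \<Rightarrow> real) \<Rightarrow> 'v \<Rightarrow> 'v \<Rightarrow> 'v" where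
  "ehess \<phi> y = frechet_derivative (egrad \<phi>) (at y)"

definition C2 :: "('v::euclidean_space \<Rightarrow> real) \<Rightarrow> bool" where
  "C2 \<phi> \<longleftrightarrow> (\<forall>y. \<phi> differentiable (at y)) \<and> (\<forall>y. egrad \<phi> differentiable (at y))
      \<and> (\<forall>u w. continuous_on UNIV (\<lambda>y. ehess \<phi> y u \<bullet> w))"

definition self_adjoint :: "('v::euclidean_space \<Rightarrow> 'v) \<Rightarrow> bool" where
  "self_adjoint H \<longleftrightarrow> linear H \<and> (\<forall>u w. H u \<bullet> w = u \<bullet> H w)"

definition eigenvalues :: "('v::euclidean_space \<Rightarrow> 'v) \<Rightarrow> real set" where
  "eigenvalues H = {l. \<exists>u. u \<noteq> 0 \<and> H u = l *\<^sub>R u}"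

definition lambda_min :: "('v::euclidean_space \<Rightarrow> 'v) \<Rightarrow> real" where
  "lambda_min H = Min (eigenvalues H)"

text \<open>The quantity called the norm of H_k in (A2), literally as defined there.\<close>
definition qnorm :: "('v::euclidean_space \<Rightarrow> 'v) \<Rightarrow> real" where
  "qnorm H = Sup {\<eta> \<bullet> H \<eta> | \<eta>. norm \<eta> \<le> 1}"

definition cmodel :: "'v::euclidean_space \<Rightarrow> ('v \<Rightarrow> 'v) \<Rightarrow> real \<Rightarrow> 'v \<Rightarrow> real" where
  "cmodel g H s \<eta> = g \<bullet> \<eta> + 1/2 * (H \<eta> \<bullet> \<eta>) + s/3 * norm \<eta> ^ 3"

definition stop_cond :: "real \<Rightarrow> real \<Rightarrow> 'v::euclidean_space \<Rightarrow> ('v \<Rightarrow> 'v) \<Rightarrow> bool" where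
  "stop_cond \<epsilon>g \<epsilon>H g H \<longleftrightarrow> norm g \<le> \<epsilon>g \<and> lambda_min H \<ge> - \<epsilon>H"

definition favg :: "(nat \<Rightarrow> 'm \<Rightarrow> real) \<Rightarrow> nat \<Rightarrow> 'm \<Rightarrow> real" where
  "favg fs n y = (\<Sum>i<n. fs i y) / real n"

text \<open>Iteration k is executed iff the stopping test failed at all j < k.
  Steps, ratios and updates are only constrained at executed iterations that do not stop.\<close>
definition valid_run ::
  "(nat \<Rightarrow> 'm \<Rightarrow> real) \<Rightarrow> nat \<Rightarrow> ('m \<Rightarrow> 'v::euclidean_space \<Rightarrow> 'm) \<Rightarrow>
   real \<Rightarrow> real \<Rightarrow> real \<Rightarrow> real \<Rightarrow> real \<Rightarrow>
   real \<Rightarrow> real \<Rightarrow> real \<Rightarrow> real \<Rightarrow> real \<Rightarrow>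
   (nat \<Rightarrow> 'm) \<Rightarrow> (nat \<Rightarrow> real) \<Rightarrow> (nat \<Rightarrow> 'v) \<Rightarrow> (nat \<Rightarrow> 'v \<Rightarrow> 'v) \<Rightarrow> (nat \<Rightarrow> 'v) \<Rightarrow> bool"
where
  "valid_run fs n R \<rho>TH \<gamma> \<sigma>0 \<nu> LH KH \<epsilon>g \<epsilon>H \<delta>g \<delta>H x \<sigma> G H \<eta> \<longleftrightarrow>
    (let f = favg fs n;
         pb = (\<lambda>k v. f (R (x k) v));
         executed = (\<lambda>k. \<forall>j<k. \<not> stop_cond \<epsilon>g \<epsilon>H (G j) (H j));
         m = (\<lambda>k. cmodel (G k) (H k) (\<sigma> k))
     in n \<ge> 1
      \<and> (\<forall>i<n. \<forall>y. C2 (\<lambda>v. fs i (R y v)))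
      \<and> (\<forall>y. R y 0 = y)
      \<and> 0 < \<epsilon>g \<and> \<epsilon>g < 1 \<and> 0 < \<epsilon>H \<and> \<epsilon>H < 1
      \<and> 0 < \<delta>g \<and> \<delta>g < 1 \<and> 0 < \<delta>H \<and> \<delta>H < 1
      \<and> \<sigma> 0 = \<sigma>0
      \<and> (\<forall>k. executed k \<longrightarrow>
            self_adjoint (H k)
          \<and> qnorm (H k) \<le> KH
          \<and> norm (G k - egrad (pb k) 0) \<le> \<delta>g
          \<and> \<delta>g \<le> 9 * \<delta>H^2 / (4 * \<sigma> k)
          \<and> \<delta>H \<le> min (min (1/18) ((1 - \<rho>TH)/9) * (sqrt (KH^2 + 4 * \<sigma> k * \<epsilon>g) - KH))
                      (min (1/9) (2 * (1 - \<rho>TH)/9) * \<nu> * \<epsilon>H))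
      \<and> (\<forall>k. executed k \<and> \<not> stop_cond \<epsilon>g \<epsilon>H (G k) (H k) \<longrightarrow>
            \<bar>pb k (\<eta> k) - f (x k) - egrad (pb k) 0 \<bullet> \<eta> k - 1/2 * (ehess (pb k) 0 (\<eta> k) \<bullet> \<eta> k)\<bar>
               \<le> 1/2 * LH * norm (\<eta> k) ^ 3
          \<and> norm (H k (\<eta> k) - ehess (pb k) 0 (\<eta> k)) \<le> \<delta>H * norm (\<eta> k)
          \<and> (\<exists>\<alpha>C. \<alpha>C \<ge> 0 \<and> (\<forall>\<alpha>\<ge>0. m k (- \<alpha>C *\<^sub>R G k) \<le> m k (- \<alpha> *\<^sub>R G k))
                   \<and> - m k (\<eta> k) \<ge> - m k (- \<alpha>C *\<^sub>R G k))
          \<and> (lambda_min (H k) < 0 \<longrightarrow>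
               (\<exists>u \<alpha>E. u \<bullet> H k u \<le> \<nu> * lambda_min (H k) * norm u ^ 2
                   \<and> \<nu> * lambda_min (H k) * norm u ^ 2 < 0
                   \<and> G k \<bullet> u \<le> 0
                   \<and> \<alpha>E \<ge> 0 \<and> (\<forall>\<alpha>\<ge>0. m k (\<alpha>E *\<^sub>R u) \<le> m k (\<alpha> *\<^sub>R u))
                   \<and> - m k (\<eta> k) \<ge> - m k (\<alpha>E *\<^sub>R u)))
          \<and> (let \<rho> = (f (x k) - pb k (\<eta> k)) / (- m k (\<eta> k)) in
               if \<rho> \<ge> \<rho>TH then x (Suc k) = R (x k) (\<eta> k) \<and> \<sigma> (Suc k) = \<sigma> k / \<gamma>
               else x (Suc k) = x k \<and> \<sigma> (Suc k) = \<gamma> * \<sigma> k)))"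

end

theory Submission
  imports Defs
begin

lemma qnorm_bound:
  fixes H :: "'v::euclidean_space \<Rightarrow> 'v"
  assumes lin: "linear H" and q: "qnorm H \<le> K"
  shows "v \<bullet> H v \<le> K * norm v ^ 2"
proof (cases "v = 0")
  case True thus ?thesis using linear_0[OF lin] by simp
next
  case False
  obtain B where B: "\<And>x. norm (H x) \<le> B * norm x" using linear_bounded[OF lin] by blast
  have bdd: "bdd_above {\<eta> \<bullet> H \<eta> | \<eta>. norm \<eta> \<le> 1}"
  proof (rule bdd_aboveI[where M="\<bar>B\<bar>"])
    fix y assume "y \<in> {\<eta> \<bullet> H \<eta> | \<eta>. norm \<eta> \<le> 1}"
    then obtain \<eta> where e: "y = \<eta> \<bullet> H \<eta>" "norm \<eta> \<le> 1" by blast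
    have "y \<le> norm \<eta> * norm (H \<eta>)" using e Cauchy_Schwarz_ineq2 by (metis norm_cauchy_schwarz)
    also have "\<dots> \<le> 1 * (\<bar>B\<bar> * 1)"
    proof (rule mult_mono)
      have "B * norm \<eta> \<le> \<bar>B\<bar> * 1" by (rule mult_mono) (use e in auto)
      thus "norm (H \<eta>) \<le> \<bar>B\<bar> * 1" using B[of \<eta>] by linarith
    qed (use e in auto)
    finally show "y \<le> \<bar>B\<bar>" by simp
  qed
  define w where "w = (1 / norm v) *\<^sub>R v"
  have nw: "norm w \<le> 1" using False by (simp add: w_def)
  have "w \<bullet> H w \<le> qnorm H" unfolding qnorm_def
    by (rule cSup_upper[OF _ bdd]) (use nw in blast)
  moreover have "w \<bullet> H w = (v \<bullet> H v) / norm v ^ 2"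
    unfolding w_def linear_cmul[OF lin] by (simp add: power2_eq_square)
  ultimately have "(v \<bullet> H v) / norm v ^ 2 \<le> K" using q by simp
  thus ?thesis using False by (simp add: divide_le_eq mult.commute)
qed


lemma cmodel_scale:
  assumes lin: "linear H" and a: "a \<ge> 0"
  shows "cmodel g H s (a *\<^sub>R u) = a * (g \<bullet> u) + 1/2 * a^2 * (H u \<bullet> u) + s/3 * a^3 * norm u ^ 3"
  unfolding cmodel_def linear_cmul[OF lin] using a
  by (simp add: power2_eq_square power3_eq_cube algebra_simps)

lemma cauchy_dec:
  fixes g :: "'v::euclidean_space"
  assumes lin: "linear H" and Hb: "\<And>v. v \<bullet> H v \<le> K * norm v ^ 2"
    and K: "K > 0" and s: "\<sigma> > 0" and e: "e > 0" "norm g > e"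
    and mn: "\<forall>\<alpha>\<ge>0. cmodel g H \<sigma> (- aC *\<^sub>R g) \<le> cmodel g H \<sigma> (- \<alpha> *\<^sub>R g)"
  shows "cmodel g H \<sigma> (- aC *\<^sub>R g) \<le> - (e^2 * min (1/K) (1/sqrt(\<sigma>*e)) / 6)"
proof -
  define \<mu> where "\<mu> = min (1/K) (1/sqrt(\<sigma>*e))"
  have mu0: "\<mu> > 0" using K s e by (simp add: \<mu>_def)
  have muK: "\<mu> * K \<le> 1" using K by (simp add: \<mu>_def min_def field_simps)
  have "\<mu> \<le> 1/sqrt(\<sigma>*e)" by (simp add: \<mu>_def)
  hence "\<mu>^2 \<le> (1/sqrt(\<sigma>*e))^2" using mu0 by (intro power_mono) auto
  hence mus: "\<sigma> * e * \<mu>^2 \<le> 1" using s e by (simp add: power_divide field_simps)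
  define ng where "ng = norm g"
  have ng: "ng > e" using e by (simp add: ng_def)
  define \<alpha> where "\<alpha> = e * \<mu> / ng"
  have a0: "\<alpha> \<ge> 0" using mu0 e ng by (simp add: \<alpha>_def)
  define r where "r = e * \<mu>"
  have r0: "r > 0" using mu0 e by (simp add: r_def)
  have ar: "\<alpha> * ng = r" using ng e by (simp add: \<alpha>_def r_def)
  have gg: "g \<bullet> g = ng^2" by (simp add: ng_def power2_norm_eq_inner)
  have "cmodel g H \<sigma> (- \<alpha> *\<^sub>R g) = - \<alpha> * ng^2 + 1/2 * \<alpha>^2 * (H g \<bullet> g) + \<sigma>/3 * \<alpha>^3 * ng^3"
    unfolding cmodel_def linear_cmul[OF lin] using a0
    by (simp add: ng_def[symmetric] gg power2_eq_square power3_eq_cube algebra_simps)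
  also have "\<dots> \<le> - \<alpha> * ng^2 + 1/2 * \<alpha>^2 * (K * ng^2) + \<sigma>/3 * \<alpha>^3 * ng^3"
    using Hb[of g] by (simp add: ng_def inner_commute mult_left_mono)
  also have "\<dots> = - r * ng + 1/2 * r^2 * K + \<sigma>/3 * r^3"
    using ar[symmetric] by (simp add: power2_eq_square power3_eq_cube algebra_simps)
  also have "\<dots> \<le> - r * e + 1/2 * r^2 * K + \<sigma>/3 * r^3"
    using r0 ng by simp
  also have "\<dots> = e^2 * \<mu> * (-1 + 1/2 * (\<mu> * K) + 1/3 * (\<sigma> * e * \<mu>^2))"
    by (simp add: r_def power2_eq_square power3_eq_cube algebra_simps)
  also have "\<dots> \<le> e^2 * \<mu> * (-1 + 1/2 * 1 + 1/3 * 1)"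
    apply (rule mult_left_mono) using muK mus mu0 e by auto
  also have "\<dots> = - (e^2 * \<mu> / 6)" by simp
  finally have "cmodel g H \<sigma> (- \<alpha> *\<^sub>R g) \<le> - (e^2 * \<mu> / 6)" .
  with mn[rule_format, OF a0] show ?thesis unfolding \<mu>_def by linarith
qed

lemma eigen_dec:
  fixes G u :: "'v::euclidean_space"
  assumes lin: "linear H" and gu: "G \<bullet> u \<le> 0" and uh: "u \<bullet> H u \<le> \<nu> * l * norm u ^ 2"
    and neg: "\<nu> * l * norm u ^ 2 < 0" and l: "l \<le> - eH" and nu: "\<nu> > 0" and eH: "eH > 0"
    and s: "\<sigma> > 0"
    and mn: "\<forall>\<alpha>\<ge>0. cmodel G H \<sigma> (aE *\<^sub>R u) \<le> cmodel G H \<sigma> (\<alpha> *\<^sub>R u)"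
  shows "cmodel G H \<sigma> (aE *\<^sub>R u) \<le> - ((\<nu>*eH)^3 / (6*\<sigma>^2))"
proof -
  have u0: "norm u > 0" using neg by (cases "u = 0") auto
  define t where "t = \<nu> * eH / \<sigma>"
  have t0: "t > 0" using nu eH s by (simp add: t_def)
  define \<alpha> where "\<alpha> = t / norm u"
  have a0: "\<alpha> \<ge> 0" using t0 u0 by (simp add: \<alpha>_def)
  have at: "\<alpha> * norm u = t" using u0 by (simp add: \<alpha>_def)
  have "cmodel G H \<sigma> (\<alpha> *\<^sub>R u) = \<alpha> * (G \<bullet> u) + 1/2 * \<alpha>^2 * (H u \<bullet> u) + \<sigma>/3 * \<alpha>^3 * norm u ^ 3"
    by (rule cmodel_scale[OF lin a0])
  also have "\<dots> \<le> 0 + 1/2 * \<alpha>^2 * (\<nu> * l * norm u ^ 2) + \<sigma>/3 * \<alpha>^3 * norm u ^ 3"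
  proof -
    have "\<alpha> * (G \<bullet> u) \<le> 0" using gu a0 by (simp add: mult_nonneg_nonpos)
    moreover have "1/2 * \<alpha>^2 * (H u \<bullet> u) \<le> 1/2 * \<alpha>^2 * (\<nu> * l * norm u ^ 2)"
      using uh by (simp add: inner_commute mult_left_mono)
    ultimately show ?thesis by linarith
  qed
  also have "\<dots> = 1/2 * t^2 * (\<nu> * l) + \<sigma>/3 * t^3"
    using at[symmetric] by (simp add: power2_eq_square power3_eq_cube algebra_simps)
  also have "\<dots> \<le> 1/2 * t^2 * (\<nu> * (- eH)) + \<sigma>/3 * t^3"
  proof -
    have "t^2 * \<nu> * l \<le> t^2 * \<nu> * (- eH)" using l nu t0 by (intro mult_left_mono) auto
    thus ?thesis by (simp add: algebra_simps)
  qed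
  also have "\<dots> = - ((\<nu>*eH)^3 / (6*\<sigma>^2))"
    using s by (simp add: t_def power2_eq_square power3_eq_cube field_simps)
  finally show ?thesis using mn[rule_format, OF a0] by linarith
qed


lemma succ_real:
  fixes s a \<sigma> LH dg \<rho> T :: real
  assumes s: "s \<ge> 0" and a: "a \<ge> 0" and sg: "\<sigma> > 0" and L: "3 * LH \<le> \<sigma>"
    and dg: "dg \<le> 9 * a^2 / (4 * \<sigma>)" and dg0: "dg \<ge> 0"
    and h: "63 * a^3 \<le> 2 * \<sigma>^2 * ((1 - \<rho>) * T)" and T: "(1 - \<rho>) * T \<ge> 0"
  shows "dg * s + a * s^2 / 2 + (LH/2 - \<sigma>/3) * s^3 \<le> (1 - \<rho>) * T"
proof (cases "\<sigma> * s \<ge> 6 * a")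
  case True
  have "dg * s \<le> 9 * a^2 / (4 * \<sigma>) * s" using dg s by (rule mult_right_mono)
  also have "\<dots> \<le> 9 * (\<sigma> * s / 6)^2 / (4 * \<sigma>) * s"
    using True a sg s by (intro mult_right_mono divide_right_mono mult_left_mono power_mono) auto
  also have "\<dots> = \<sigma> * s^3 / 16" using sg by (simp add: power2_eq_square power3_eq_cube field_simps)
  finally have 1: "dg * s \<le> \<sigma> * s^3 / 16" .
  have "a * s^2 / 2 \<le> (\<sigma> * s / 6) * s^2 / 2" using True s by (intro divide_right_mono mult_right_mono) auto
  hence 2: "a * s^2 / 2 \<le> \<sigma> * s^3 / 12" by (simp add: power2_eq_square power3_eq_cube)
  have 3: "(LH/2 - \<sigma>/3) * s^3 \<le> (- \<sigma>/6) * s^3" using L s by (intro mult_right_mono) auto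
  have "\<sigma> * s^3 \<ge> 0" using sg s by simp
  thus ?thesis using 1 2 3 T by linarith
next
  case False
  hence sl: "s \<le> 6 * a / \<sigma>" using sg by (simp add: field_simps)
  have "dg * s \<le> 9 * a^2 / (4 * \<sigma>) * (6 * a / \<sigma>)"
    using dg sl s dg0 by (intro mult_mono) auto
  also have "\<dots> = 27 * a^3 / (2 * \<sigma>^2)" using sg by (simp add: power2_eq_square power3_eq_cube field_simps)
  finally have 1: "dg * s \<le> 27 * a^3 / (2 * \<sigma>^2)" .
  have "s^2 \<le> (6 * a / \<sigma>)^2" using sl s by (intro power_mono) auto
  hence "a * s^2 / 2 \<le> a * (6 * a / \<sigma>)^2 / 2" using a by (intro divide_right_mono mult_left_mono) auto
  hence 2: "a * s^2 / 2 \<le> 18 * a^3 / \<sigma>^2" by (simp add: power2_eq_square power3_eq_cube field_simps)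
  have 3: "(LH/2 - \<sigma>/3) * s^3 \<le> 0" using L s sg by (intro mult_nonpos_nonneg) auto
  have "27 * a^3 / (2 * \<sigma>^2) + 18 * a^3 / \<sigma>^2 = 63 * a^3 / (2 * \<sigma>^2)" using sg by (simp add: field_simps)
  also have "\<dots> \<le> (1 - \<rho>) * T" using h sg by (simp add: field_simps)
  finally show ?thesis using 1 2 3 by linarith
qed

lemma grad_63:
  fixes a c K \<sigma> e \<rho> T :: real
  assumes a: "a \<ge> 0" and ac: "a \<le> c * (sqrt (K^2 + 4 * \<sigma> * e) - K)"
    and c1: "c \<le> 1/18" and c2: "c \<le> (1 - \<rho>)/9" and K: "K > 0" and sg: "\<sigma> > 0" and e: "e > 0"
    and T: "T \<ge> e^2 * min (1/K) (1/sqrt(\<sigma>*e)) / 6" and r: "\<rho> < 1"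
  shows "63 * a^3 \<le> 2 * \<sigma>^2 * ((1 - \<rho>) * T)"
proof -
  define \<mu> where "\<mu> = min (1/K) (1/sqrt(\<sigma>*e))"
  define X where "X = \<sigma> * e"
  have X0: "X > 0" using sg e by (simp add: X_def)
  have mu0: "\<mu> > 0" using K X0 by (simp add: \<mu>_def X_def)
  have "\<mu> \<le> 1/sqrt(\<sigma>*e)" by (simp add: \<mu>_def)
  hence "\<mu>^2 \<le> (1/sqrt(\<sigma>*e))^2" using mu0 by (intro power_mono) auto
  hence mus: "X * \<mu>^2 \<le> 1" using X0 by (simp add: X_def power_divide field_simps)
  have sq0: "sqrt (K^2 + 4 * X) - K > 0"
  proof -
    have "sqrt (K^2) < sqrt (K^2 + 4 * X)" using X0 by (intro real_sqrt_less_mono) simp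
    thus ?thesis using K by simp
  qed
  have b1: "sqrt (K^2 + 4 * X) \<le> K + 2 * X / K"
  proof -
    have e1: "(K + 2 * X / K)^2 = K^2 + 4 * X + (2 * X / K)^2"
      unfolding power2_eq_square using K by (simp add: field_simps)
    have "(2 * X / K)^2 \<ge> 0" by simp
    hence "K^2 + 4 * X \<le> (K + 2 * X / K)^2" unfolding e1 by linarith
    hence "sqrt (K^2 + 4 * X) \<le> sqrt ((K + 2 * X / K)^2)" by (rule real_sqrt_le_mono)
    moreover have "\<bar>K + 2 * X / K\<bar> = K + 2 * X / K" using K X0 by simp
    ultimately show ?thesis by simp
  qed
  have b2: "sqrt (K^2 + 4 * X) \<le> K + 2 * sqrt X"
  proof -
    have ss: "sqrt X * sqrt X = X" using X0 by simp
    have e1: "(K + 2 * sqrt X)^2 = K^2 + 4 * X + 4 * K * sqrt X"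
      unfolding power2_eq_square using ss by (simp add: algebra_simps)
    have "K * sqrt X \<ge> 0" using K X0 by simp
    hence "K^2 + 4 * X \<le> (K + 2 * sqrt X)^2" unfolding e1 by linarith
    hence "sqrt (K^2 + 4 * X) \<le> sqrt ((K + 2 * sqrt X)^2)" by (rule real_sqrt_le_mono)
    moreover have "\<bar>K + 2 * sqrt X\<bar> = K + 2 * sqrt X" using K X0 by simp
    ultimately show ?thesis by simp
  qed
  have "sqrt (K^2 + 4 * X) - K \<le> 2 * X * \<mu>"
  proof (cases "1/K \<le> 1/sqrt X")
    case True
    hence "\<mu> = 1/K" by (simp add: \<mu>_def X_def)
    thus ?thesis using b1 by simp
  next
    case False
    hence m: "\<mu> = 1/sqrt X" by (simp add: \<mu>_def X_def)
    have "2 * X * (1 / sqrt X) = 2 * (X / sqrt X)" by simp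
    also have "\<dots> = 2 * sqrt X" using X0 by (simp add: real_div_sqrt)
    finally have "2 * X * (1 / sqrt X) = 2 * sqrt X" .
    thus ?thesis using b2 m by simp
  qed
  have "c * (sqrt (K^2 + 4 * X) - K) \<ge> 0" using a ac by (simp add: X_def mult.assoc)
  hence c0: "c \<ge> 0" using sq0 by (simp add: zero_le_mult_iff)
  have "c * (sqrt (K^2 + 4 * X) - K) \<le> c * (2 * X * \<mu>)"
    using `sqrt (K^2 + 4 * X) - K \<le> 2 * X * \<mu>` c0 by (rule mult_left_mono)
  hence aa: "a \<le> 2 * c * X * \<mu>" using ac unfolding X_def by (simp add: mult.assoc)
  have "a^3 \<le> (2 * c * X * \<mu>)^3" using aa a by (intro power_mono) auto
  also have "\<dots> = 8 * c^2 * c * X^3 * \<mu>^3" by (simp add: power2_eq_square power3_eq_cube)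
  also have "\<dots> \<le> 8 * (1/18)^2 * ((1 - \<rho>)/9) * X^3 * \<mu>^3"
    using c0 c1 c2 X0 mu0 by (intro mult_right_mono mult_mono mult_left_mono power_mono) auto
  also have "\<dots> = 8 / 2916 * (1 - \<rho>) * X^3 * \<mu>^3" by (simp add: power2_eq_square)
  finally have a3: "a^3 \<le> 8 / 2916 * (1 - \<rho>) * X^3 * \<mu>^3" .
  have "63 * a^3 \<le> 63 * (8 / 2916 * (1 - \<rho>) * X^3 * \<mu>^3)" using a3 by linarith
  also have "\<dots> = (504 / 2916) * ((1 - \<rho>) * \<sigma>^2 * e^2 * \<mu>) * (X * \<mu>^2)"
    by (simp add: X_def power2_eq_square power3_eq_cube field_simps)
  also have "\<dots> \<le> (504 / 2916) * ((1 - \<rho>) * \<sigma>^2 * e^2 * \<mu>) * 1"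
    using mus r mu0 sg e by (intro mult_left_mono) auto
  also have "\<dots> \<le> 2 * \<sigma>^2 * ((1 - \<rho>) * (e^2 * \<mu> / 6))"
    using r mu0 sg e by (simp add: field_simps)
  also have "\<dots> \<le> 2 * \<sigma>^2 * ((1 - \<rho>) * T)"
    using T r sg unfolding \<mu>_def by (intro mult_left_mono) auto
  finally show ?thesis .
qed

lemma eig_63:
  fixes a b \<nu> eH \<sigma> \<rho> T :: real
  assumes a: "a \<ge> 0" and ab: "a \<le> b * \<nu> * eH"
    and b1: "b \<le> 1/9" and b2: "b \<le> 2 * (1 - \<rho>)/9" and nu: "\<nu> > 0" and eH: "eH > 0" and sg: "\<sigma> > 0"
    and T: "T \<ge> (\<nu>*eH)^3 / (6*\<sigma>^2)" and r: "\<rho> < 1"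
  shows "63 * a^3 \<le> 2 * \<sigma>^2 * ((1 - \<rho>) * T)"
proof -
  define Y where "Y = \<nu> * eH"
  have Y0: "Y > 0" using nu eH by (simp add: Y_def)
  have "b * Y \<ge> 0" using a ab by (simp add: Y_def mult.assoc)
  hence b0: "b \<ge> 0" using Y0 by (simp add: zero_le_mult_iff)
  have "a^3 \<le> (b * Y)^3" using ab a by (intro power_mono) (auto simp: Y_def mult.assoc)
  also have "\<dots> = b^2 * b * Y^3" by (simp add: power2_eq_square power3_eq_cube)
  also have "\<dots> \<le> (1/9)^2 * (2 * (1 - \<rho>)/9) * Y^3"
    using b0 b1 b2 Y0 by (intro mult_right_mono mult_mono power_mono) auto
  finally have a3: "a^3 \<le> (1/9)^2 * (2 * (1 - \<rho>)/9) * Y^3" .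
  have "63 * a^3 \<le> 63 * ((1/9)^2 * (2 * (1 - \<rho>)/9) * Y^3)" using a3 by linarith
  also have "\<dots> \<le> 2 * \<sigma>^2 * ((1 - \<rho>) * (Y^3 / (6*\<sigma>^2)))"
    using r Y0 sg by (simp add: field_simps)
  also have "\<dots> \<le> 2 * \<sigma>^2 * ((1 - \<rho>) * T)"
    using T r sg unfolding Y_def by (intro mult_left_mono) auto
  finally show ?thesis .
qed


lemma vr_basic:
  assumes "valid_run fs n R \<rho>TH \<gamma> \<sigma>0 \<nu> LH KH \<epsilon>g \<epsilon>H \<delta>g \<delta>H x \<sigma> G H \<eta>"
  shows "0 < \<epsilon>g \<and> \<epsilon>g < 1 \<and> 0 < \<epsilon>H \<and> \<epsilon>H < 1 \<and> 0 < \<delta>g \<and> \<delta>g < 1 \<and> 0 < \<delta>H \<and> \<delta>H < 1 \<and> \<sigma> 0 = \<sigma>0"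
  using assms unfolding valid_run_def Let_def by blast

lemma vr_exec:
  assumes "valid_run fs n R \<rho>TH \<gamma> \<sigma>0 \<nu> LH KH \<epsilon>g \<epsilon>H \<delta>g \<delta>H x \<sigma> G H \<eta>"
    and "\<forall>j<k. \<not> stop_cond \<epsilon>g \<epsilon>H (G j) (H j)"
  shows "self_adjoint (H k)
          \<and> qnorm (H k) \<le> KH
          \<and> norm (G k - egrad (\<lambda>v. favg fs n (R (x k) v)) 0) \<le> \<delta>g
          \<and> \<delta>g \<le> 9 * \<delta>H^2 / (4 * \<sigma> k)
          \<and> \<delta>H \<le> min (min (1/18) ((1 - \<rho>TH)/9) * (sqrt (KH^2 + 4 * \<sigma> k * \<epsilon>g) - KH))
                      (min (1/9) (2 * (1 - \<rho>TH)/9) * \<nu> * \<epsilon>H)"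
  using assms unfolding valid_run_def Let_def by blast

lemma vr_step:
  assumes "valid_run fs n R \<rho>TH \<gamma> \<sigma>0 \<nu> LH KH \<epsilon>g \<epsilon>H \<delta>g \<delta>H x \<sigma> G H \<eta>"
    and "\<forall>j<k. \<not> stop_cond \<epsilon>g \<epsilon>H (G j) (H j)" and "\<not> stop_cond \<epsilon>g \<epsilon>H (G k) (H k)"
  shows "\<bar>favg fs n (R (x k) (\<eta> k)) - favg fs n (x k) - egrad (\<lambda>v. favg fs n (R (x k) v)) 0 \<bullet> \<eta> k
              - 1/2 * (ehess (\<lambda>v. favg fs n (R (x k) v)) 0 (\<eta> k) \<bullet> \<eta> k)\<bar>
               \<le> 1/2 * LH * norm (\<eta> k) ^ 3
          \<and> norm (H k (\<eta> k) - ehess (\<lambda>v. favg fs n (R (x k) v)) 0 (\<eta> k)) \<le> \<delta>H * norm (\<eta> k)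
          \<and> (\<exists>\<alpha>C. \<alpha>C \<ge> 0 \<and> (\<forall>\<alpha>\<ge>0. cmodel (G k) (H k) (\<sigma> k) (- \<alpha>C *\<^sub>R G k) \<le> cmodel (G k) (H k) (\<sigma> k) (- \<alpha> *\<^sub>R G k))
                   \<and> - cmodel (G k) (H k) (\<sigma> k) (\<eta> k) \<ge> - cmodel (G k) (H k) (\<sigma> k) (- \<alpha>C *\<^sub>R G k))
          \<and> (lambda_min (H k) < 0 \<longrightarrow>
               (\<exists>u \<alpha>E. u \<bullet> H k u \<le> \<nu> * lambda_min (H k) * norm u ^ 2
                   \<and> \<nu> * lambda_min (H k) * norm u ^ 2 < 0
                   \<and> G k \<bullet> u \<le> 0
                   \<and> \<alpha>E \<ge> 0 \<and> (\<forall>\<alpha>\<ge>0. cmodel (G k) (H k) (\<sigma> k) (\<alpha>E *\<^sub>R u) \<le> cmodel (G k) (H k) (\<sigma> k) (\<alpha> *\<^sub>R u))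
                   \<and> - cmodel (G k) (H k) (\<sigma> k) (\<eta> k) \<ge> - cmodel (G k) (H k) (\<sigma> k) (\<alpha>E *\<^sub>R u)))
          \<and> (let \<rho> = (favg fs n (x k) - favg fs n (R (x k) (\<eta> k))) / (- cmodel (G k) (H k) (\<sigma> k) (\<eta> k)) in
               if \<rho> \<ge> \<rho>TH then x (Suc k) = R (x k) (\<eta> k) \<and> \<sigma> (Suc k) = \<sigma> k / \<gamma>
               else x (Suc k) = x k \<and> \<sigma> (Suc k) = \<gamma> * \<sigma> k)"
  using assms unfolding valid_run_def Let_def by blast

lemma key_iter:
  fixes G eg \<eta> :: "'v::euclidean_space"
  assumes sa: "self_adjoint H" and q: "qnorm H \<le> KH" and K: "KH > 0" and sg: "\<sigma> > 0"
    and nu: "\<nu> > 0" and r: "\<rho> < 1" and eg: "\<epsilon>g > 0" and eH: "\<epsilon>H > 0" and dH: "\<delta>H > 0"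
    and dHb: "\<delta>H \<le> min (min (1/18) ((1 - \<rho>)/9) * (sqrt (KH^2 + 4 * \<sigma> * \<epsilon>g) - KH))
                      (min (1/9) (2 * (1 - \<rho>)/9) * \<nu> * \<epsilon>H)"
    and ns: "\<not> stop_cond \<epsilon>g \<epsilon>H G H"
    and cp: "\<exists>\<alpha>C. \<alpha>C \<ge> 0 \<and> (\<forall>\<alpha>\<ge>0. cmodel G H \<sigma> (- \<alpha>C *\<^sub>R G) \<le> cmodel G H \<sigma> (- \<alpha> *\<^sub>R G))
                   \<and> - cmodel G H \<sigma> \<eta> \<ge> - cmodel G H \<sigma> (- \<alpha>C *\<^sub>R G)"
    and ep: "lambda_min H < 0 \<longrightarrow>
               (\<exists>u \<alpha>E. u \<bullet> H u \<le> \<nu> * lambda_min H * norm u ^ 2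
                   \<and> \<nu> * lambda_min H * norm u ^ 2 < 0
                   \<and> G \<bullet> u \<le> 0
                   \<and> \<alpha>E \<ge> 0 \<and> (\<forall>\<alpha>\<ge>0. cmodel G H \<sigma> (\<alpha>E *\<^sub>R u) \<le> cmodel G H \<sigma> (\<alpha> *\<^sub>R u))
                   \<and> - cmodel G H \<sigma> \<eta> \<ge> - cmodel G H \<sigma> (\<alpha>E *\<^sub>R u))"
  shows "- cmodel G H \<sigma> \<eta> \<ge> min (\<epsilon>g^2 * min (1/KH) (1/sqrt(\<sigma>*\<epsilon>g)) / 6) ((\<nu>*\<epsilon>H)^3 / (6*\<sigma>^2))
      \<and> 63 * \<delta>H^3 \<le> 2 * \<sigma>^2 * ((1 - \<rho>) * (- cmodel G H \<sigma> \<eta>))"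
proof -
  have lin: "linear H" using sa by (simp add: self_adjoint_def)
  have Hb: "\<And>v. v \<bullet> H v \<le> KH * norm v ^ 2" using qnorm_bound[OF lin q] .
  from ns have "norm G > \<epsilon>g \<or> lambda_min H < - \<epsilon>H" unfolding stop_cond_def by linarith
  thus ?thesis
  proof
    assume gG: "norm G > \<epsilon>g"
    from cp obtain aC where aC: "\<forall>\<alpha>\<ge>0. cmodel G H \<sigma> (- aC *\<^sub>R G) \<le> cmodel G H \<sigma> (- \<alpha> *\<^sub>R G)"
      "- cmodel G H \<sigma> \<eta> \<ge> - cmodel G H \<sigma> (- aC *\<^sub>R G)" by blast
    have T: "- cmodel G H \<sigma> \<eta> \<ge> \<epsilon>g^2 * min (1/KH) (1/sqrt(\<sigma>*\<epsilon>g)) / 6"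
      using cauchy_dec[OF lin Hb K sg eg gG aC(1)] aC(2) by linarith
    have "63 * \<delta>H^3 \<le> 2 * \<sigma>^2 * ((1 - \<rho>) * (- cmodel G H \<sigma> \<eta>))"
      apply (rule grad_63[where c="min (1/18) ((1 - \<rho>)/9)" and K=KH and e=\<epsilon>g, OF _ _ min.cobounded1 min.cobounded2])
      using dH dHb K sg eg T r by (auto simp: min_le_iff_disj)
    thus ?thesis using order_trans[OF min.cobounded1 T] by blast
  next
    assume lm: "lambda_min H < - \<epsilon>H"
    hence "lambda_min H < 0" using eH by linarith
    with ep obtain u aE where u: "u \<bullet> H u \<le> \<nu> * lambda_min H * norm u ^ 2"
                   "\<nu> * lambda_min H * norm u ^ 2 < 0"
                   "G \<bullet> u \<le> 0"
                   "(\<forall>\<alpha>\<ge>0. cmodel G H \<sigma> (aE *\<^sub>R u) \<le> cmodel G H \<sigma> (\<alpha> *\<^sub>R u))"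
                   "- cmodel G H \<sigma> \<eta> \<ge> - cmodel G H \<sigma> (aE *\<^sub>R u)" by blast
    have T: "- cmodel G H \<sigma> \<eta> \<ge> (\<nu>*\<epsilon>H)^3 / (6*\<sigma>^2)"
      using eigen_dec[OF lin u(3) u(1) u(2) _ nu eH sg u(4)] lm u(5) by force
    have "63 * \<delta>H^3 \<le> 2 * \<sigma>^2 * ((1 - \<rho>) * (- cmodel G H \<sigma> \<eta>))"
      apply (rule eig_63[where b="min (1/9) (2 * (1 - \<rho>)/9)" and \<nu>=\<nu> and eH=\<epsilon>H, OF _ _ min.cobounded1 min.cobounded2])
      using dH dHb nu sg eH T r by (auto simp: min_le_iff_disj)
    thus ?thesis using order_trans[OF min.cobounded2 T] by blast
  qed
qed

lemma success_iter:
  fixes G eg \<eta> :: "'v::euclidean_space"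
  assumes A1: "\<bar>f1 - f0 - eg \<bullet> \<eta> - 1/2 * (Hs \<eta> \<bullet> \<eta>)\<bar> \<le> 1/2 * LH * norm \<eta> ^ 3"
    and A3: "norm (H \<eta> - Hs \<eta>) \<le> \<delta>H * norm \<eta>" and gd: "norm (G - eg) \<le> \<delta>g"
    and dg: "\<delta>g \<le> 9 * \<delta>H^2 / (4 * \<sigma>)" and dg0: "\<delta>g \<ge> 0" and dH: "\<delta>H \<ge> 0"
    and h: "63 * \<delta>H^3 \<le> 2 * \<sigma>^2 * ((1 - \<rho>) * T)" and Tdef: "T = - cmodel G H \<sigma> \<eta>"
    and T0: "T > 0" and L: "3 * LH \<le> \<sigma>" and sg: "\<sigma> > 0" and r: "\<rho> < 1"
  shows "f0 - f1 \<ge> \<rho> * T"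
proof -
  define s where "s = norm \<eta>"
  have s0: "s \<ge> 0" by (simp add: s_def)
  have e1: "(eg - G) \<bullet> \<eta> \<le> \<delta>g * s"
    using norm_cauchy_schwarz[of "eg - G" \<eta>] gd by (simp add: s_def norm_minus_commute mult_right_mono order_trans)
  have "(Hs \<eta> - H \<eta>) \<bullet> \<eta> \<le> norm (Hs \<eta> - H \<eta>) * s"
    using norm_cauchy_schwarz[of "Hs \<eta> - H \<eta>" \<eta>] by (simp add: s_def)
  also have "\<dots> \<le> \<delta>H * s * s" using A3 s0 by (simp add: s_def norm_minus_commute mult_right_mono)
  finally have e2: "(Hs \<eta> - H \<eta>) \<bullet> \<eta> \<le> \<delta>H * s^2" by (simp add: power2_eq_square mult.assoc)
  have f1: "f1 - f0 \<le> eg \<bullet> \<eta> + 1/2 * (Hs \<eta> \<bullet> \<eta>) + 1/2 * LH * s^3" using A1 unfolding s_def abs_le_iff by linarith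
  have m: "cmodel G H \<sigma> \<eta> = G \<bullet> \<eta> + 1/2 * (H \<eta> \<bullet> \<eta>) + \<sigma>/3 * s^3" by (simp add: cmodel_def s_def)
  have "f1 - f0 - cmodel G H \<sigma> \<eta> \<le> (eg - G) \<bullet> \<eta> + 1/2 * ((Hs \<eta> - H \<eta>) \<bullet> \<eta>) + (LH/2 - \<sigma>/3) * s^3"
    using f1 m by (simp add: inner_diff_left algebra_simps)
  also have "\<dots> \<le> \<delta>g * s + \<delta>H * s^2 / 2 + (LH/2 - \<sigma>/3) * s^3" using e1 e2 by simp
  also have "\<dots> \<le> (1 - \<rho>) * T"
    by (rule succ_real[OF s0 dH sg L dg dg0 h]) (use T0 r in simp)
  finally show ?thesis using Tdef by (simp add: algebra_simps)
qed


lemma inv_min: "(a::real) > 0 \<Longrightarrow> b > 0 \<Longrightarrow> 1 / min a b = max (1/a) (1/b)"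
  using divide_left_mono[of a b 1] divide_left_mono[of b a 1] by (auto simp: min_def max_def)

theorem theorem3p9:
  fixes \<rho>TH \<gamma> \<sigma>0 \<nu> LH KH \<Delta> :: real
  assumes "0 < \<rho>TH" "\<rho>TH < 1" "\<gamma> > 1" "\<sigma>0 > 0" "0 < \<nu>" "\<nu> < 1"
    and "LH > 0" "KH > 0" "\<sigma>0 \<le> 2 * \<gamma> * LH"
  shows "\<exists>C. \<forall>(fs :: nat \<Rightarrow> 'm \<Rightarrow> real) n (R :: 'm \<Rightarrow> 'v::euclidean_space \<Rightarrow> 'm)
            \<epsilon>g \<epsilon>H \<delta>g \<delta>H x \<sigma> G H \<eta>.
           valid_run fs n R \<rho>TH \<gamma> \<sigma>0 \<nu> LH KH \<epsilon>g \<epsilon>H \<delta>g \<delta>H x \<sigma> G H \<eta>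
           \<and> (\<exists>xm. (\<forall>y. favg fs n xm \<le> favg fs n y) \<and> favg fs n (x 0) - favg fs n xm \<le> \<Delta>)
           \<longrightarrow> (\<exists>k. real k \<le> C * max (1 / \<epsilon>g^2) (1 / \<epsilon>H^3)
                    \<and> stop_cond \<epsilon>g \<epsilon>H (G k) (H k))"
proof -
  note rho0 = assms(1) and rho1 = assms(2) and gam = assms(3) and s0 = assms(4)
    and nu0 = assms(5) and LH = assms(7) and KH = assms(8) and s0b = assms(9)
  define smax where "smax = 3 * \<gamma> * LH"
  define \<mu>0 where "\<mu>0 = min (1/KH) (1/sqrt smax)"
  define d where "d = min (\<mu>0/6) (\<nu>^3/(6 * smax^2))"
  define Lc where "Lc = log \<gamma> smax - log \<gamma> \<sigma>0"
  define C where "C = 2 * \<bar>\<Delta>\<bar> / (\<rho>TH * d) + Lc + 1"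
  have smax0: "smax > 0" using gam LH by (simp add: smax_def)
  have "\<gamma> * LH > 0" using gam LH by simp
  hence "2 * (\<gamma> * LH) \<le> 3 * (\<gamma> * LH)" by linarith
  moreover have "\<sigma>0 \<le> 2 * (\<gamma> * LH)" using s0b by (simp add: mult.assoc)
  moreover have "smax = 3 * (\<gamma> * LH)" by (simp add: smax_def mult.assoc)
  ultimately have s0smax: "\<sigma>0 \<le> smax" by linarith
  have mu00: "\<mu>0 > 0" using KH smax0 by (simp add: \<mu>0_def)
  have d0: "d > 0" using mu00 nu0 smax0 by (simp add: d_def)
  have Lc0: "Lc \<ge> 0" using s0smax s0 gam by (simp add: Lc_def)
  show ?thesis
  proof (rule exI[of _ C], intro allI impI)
    fix fs :: "nat \<Rightarrow> 'm \<Rightarrow> real" and n and R :: "'m \<Rightarrow> 'v::euclidean_space \<Rightarrow> 'm"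
      and \<epsilon>g \<epsilon>H \<delta>g \<delta>H x \<sigma> G H \<eta>
    assume "valid_run fs n R \<rho>TH \<gamma> \<sigma>0 \<nu> LH KH \<epsilon>g \<epsilon>H \<delta>g \<delta>H x \<sigma> G H \<eta>
           \<and> (\<exists>xm. (\<forall>y. favg fs n xm \<le> favg fs n y) \<and> favg fs n (x 0) - favg fs n xm \<le> \<Delta>)"
    then obtain xm where vr: "valid_run fs n R \<rho>TH \<gamma> \<sigma>0 \<nu> LH KH \<epsilon>g \<epsilon>H \<delta>g \<delta>H x \<sigma> G H \<eta>"
      and xm: "\<And>y. favg fs n xm \<le> favg fs n y" and xmD: "favg fs n (x 0) - favg fs n xm \<le> \<Delta>"
      by blast
    have B: "0 < \<epsilon>g \<and> \<epsilon>g < 1 \<and> 0 < \<epsilon>H \<and> \<epsilon>H < 1 \<and> 0 < \<delta>g \<and> \<delta>g < 1 \<and> 0 < \<delta>H \<and> \<delta>H < 1 \<and> \<sigma> 0 = \<sigma>0"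
      by (rule vr_basic[OF vr])
    hence eg: "0 < \<epsilon>g" "\<epsilon>g < 1" and eH: "0 < \<epsilon>H" "\<epsilon>H < 1" and dg: "0 < \<delta>g" and dH: "0 < \<delta>H"
      and sig0: "\<sigma> 0 = \<sigma>0" by auto
    define D where "D = d * min (\<epsilon>g^2) (\<epsilon>H^3)"
    have D0: "D > 0" using d0 eg eH by (simp add: D_def)
    define T where "T k = - cmodel (G k) (H k) (\<sigma> k) (\<eta> k)" for k
    define \<Psi> where "\<Psi> k = 2 * favg fs n (x k) / (\<rho>TH * D) - log \<gamma> (\<sigma> k)" for k
    have inv: "0 < \<sigma> k \<and> \<sigma> k \<le> smax \<and> \<Psi> k \<le> \<Psi> 0 - real k"
      if "\<forall>j<k. \<not> stop_cond \<epsilon>g \<epsilon>H (G j) (H j)" for k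
      using that
    proof (induction k)
      case 0
      then show ?case using sig0 s0 s0smax by simp
    next
      case (Suc k)
      have ex: "\<forall>j<k. \<not> stop_cond \<epsilon>g \<epsilon>H (G j) (H j)" using Suc.prems by auto
      have ns: "\<not> stop_cond \<epsilon>g \<epsilon>H (G k) (H k)" using Suc.prems by auto
      from Suc.IH[OF ex] have sk0: "0 < \<sigma> k" and skm: "\<sigma> k \<le> smax" and Pk: "\<Psi> k \<le> \<Psi> 0 - real k"
        by auto
      note E = vr_exec[OF vr ex]
      note S = vr_step[OF vr ex ns]
      have K: "- cmodel (G k) (H k) (\<sigma> k) (\<eta> k) \<ge> min (\<epsilon>g^2 * min (1/KH) (1/sqrt(\<sigma> k*\<epsilon>g)) / 6) ((\<nu>*\<epsilon>H)^3 / (6*\<sigma> k^2))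
          \<and> 63 * \<delta>H^3 \<le> 2 * \<sigma> k^2 * ((1 - \<rho>TH) * (- cmodel (G k) (H k) (\<sigma> k) (\<eta> k)))"
        apply (rule key_iter)
        using E S KH sk0 nu0 rho1 eg eH dH ns by auto
      have TD: "T k \<ge> D"
      proof -
        have "\<sigma> k * \<epsilon>g \<le> smax" using skm eg sk0 by (metis less_eq_real_def mult_right_le_one_le order_trans)
        hence "sqrt (\<sigma> k * \<epsilon>g) \<le> sqrt smax" by simp
        hence "1/sqrt smax \<le> 1/sqrt(\<sigma> k * \<epsilon>g)" using sk0 eg smax0 by (intro divide_left_mono) auto
        hence "\<mu>0 \<le> min (1/KH) (1/sqrt(\<sigma> k*\<epsilon>g))" unfolding \<mu>0_def by auto
        hence "\<epsilon>g^2 * \<mu>0 / 6 \<le> \<epsilon>g^2 * min (1/KH) (1/sqrt(\<sigma> k*\<epsilon>g)) / 6"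
          by (intro divide_right_mono mult_left_mono) auto
        moreover have "D \<le> \<epsilon>g^2 * \<mu>0 / 6"
        proof -
          have "D \<le> d * \<epsilon>g^2" unfolding D_def using d0 by (intro mult_left_mono) auto
          also have "\<dots> \<le> (\<mu>0/6) * \<epsilon>g^2" unfolding d_def by (intro mult_right_mono) auto
          finally show ?thesis by (simp add: mult.commute)
        qed
        ultimately have a1: "D \<le> \<epsilon>g^2 * min (1/KH) (1/sqrt(\<sigma> k*\<epsilon>g)) / 6" by linarith
        have "D \<le> d * \<epsilon>H^3" unfolding D_def using d0 by (intro mult_left_mono) auto
        also have "\<dots> \<le> (\<nu>^3/(6 * smax^2)) * \<epsilon>H^3" unfolding d_def using eH by (intro mult_right_mono) auto
        also have "\<dots> = \<nu>^3 * \<epsilon>H^3 / (6 * smax^2)" by simp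
        also have "\<dots> \<le> \<nu>^3 * \<epsilon>H^3 / (6*\<sigma> k^2)"
          using sk0 skm nu0 eH by (intro divide_left_mono mult_left_mono power_mono) auto
        also have "\<dots> = (\<nu>*\<epsilon>H)^3 / (6*\<sigma> k^2)" by (simp add: power_mult_distrib)
        finally have a2: "D \<le> (\<nu>*\<epsilon>H)^3 / (6*\<sigma> k^2)" .
        show ?thesis using K a1 a2 unfolding T_def by linarith
      qed
      have T0: "T k > 0" using TD D0 by linarith
      have Lg: "log \<gamma> \<gamma> = 1" using gam by simp
      show ?case
      proof (cases "\<rho>TH \<le> (favg fs n (x k) - favg fs n (R (x k) (\<eta> k))) / T k")
        case True
        hence upd: "x (Suc k) = R (x k) (\<eta> k)" "\<sigma> (Suc k) = \<sigma> k / \<gamma>"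
          using S unfolding Let_def T_def by auto
        have "\<rho>TH * T k \<le> favg fs n (x k) - favg fs n (R (x k) (\<eta> k))"
          using True T0 by (simp add: pos_le_divide_eq mult.commute)
        moreover have "\<rho>TH * D \<le> \<rho>TH * T k" using TD rho0 by simp
        ultimately have fd: "favg fs n (x (Suc k)) \<le> favg fs n (x k) - \<rho>TH * D" using upd by simp
        have rD: "\<rho>TH * D > 0" using rho0 D0 by simp
        have "2 * favg fs n (x (Suc k)) / (\<rho>TH * D) \<le> 2 * (favg fs n (x k) - \<rho>TH * D) / (\<rho>TH * D)"
          using fd rD by (intro divide_right_mono) auto
        also have "\<dots> = 2 * favg fs n (x k) / (\<rho>TH * D) - 2" using rD D0 rho0 by (simp add: right_diff_distrib diff_divide_distrib)
        finally have f2: "2 * favg fs n (x (Suc k)) / (\<rho>TH * D) \<le> 2 * favg fs n (x k) / (\<rho>TH * D) - 2" .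
        have l2: "log \<gamma> (\<sigma> (Suc k)) = log \<gamma> (\<sigma> k) - 1" using upd sk0 gam Lg by (simp add: log_divide)
        have "\<Psi> (Suc k) \<le> \<Psi> k - 1" unfolding \<Psi>_def using f2 l2 by linarith
        moreover have "0 < \<sigma> (Suc k)" using upd sk0 gam by simp
        moreover have "\<sigma> k * 1 \<le> smax * \<gamma>" using skm gam smax0 by (intro mult_mono) auto
        hence "\<sigma> (Suc k) \<le> smax" using upd gam by (simp add: divide_le_eq)
        ultimately show ?thesis using Pk by simp
      next
        case False
        hence upd: "x (Suc k) = x k" "\<sigma> (Suc k) = \<gamma> * \<sigma> k"
          using S unfolding Let_def T_def by auto
        have small: "\<sigma> k < 3 * LH"
        proof (rule ccontr)
          assume "\<not> \<sigma> k < 3 * LH"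
          hence L3: "3 * LH \<le> \<sigma> k" by simp
          have "favg fs n (x k) - favg fs n (R (x k) (\<eta> k)) \<ge> \<rho>TH * T k"
            apply (rule success_iter[where eg="egrad (\<lambda>v. favg fs n (R (x k) v)) 0"
                   and Hs="ehess (\<lambda>v. favg fs n (R (x k) v)) 0" and G="G k" and H="H k" and \<sigma>="\<sigma> k"
                   and \<eta>="\<eta> k" and LH=LH and \<delta>H=\<delta>H and \<delta>g=\<delta>g])
            using S E K L3 sk0 rho1 T0 dg dH by (auto simp: T_def)
          hence "\<rho>TH \<le> (favg fs n (x k) - favg fs n (R (x k) (\<eta> k))) / T k"
            using T0 by (simp add: pos_le_divide_eq mult.commute)
          thus False using False by simp
        qed
        have l2: "log \<gamma> (\<sigma> (Suc k)) = log \<gamma> (\<sigma> k) + 1" using upd sk0 gam Lg by (simp add: log_mult)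
        have "\<Psi> (Suc k) = \<Psi> k - 1" unfolding \<Psi>_def using l2 upd by simp
        moreover have "0 < \<sigma> (Suc k)" using upd sk0 gam by simp
        moreover have "\<sigma> (Suc k) \<le> smax" using upd small gam unfolding smax_def by simp
        ultimately show ?thesis using Pk by simp
      qed
    qed
    define M where "M = max (1 / \<epsilon>g^2) (1 / \<epsilon>H^3)"
    have M1: "M \<ge> 1" using eg by (simp add: M_def le_max_iff_disj power_le_one)
    have DM: "1 / D = M / d" unfolding D_def M_def using eg eH d0
      by (simp add: inv_min[symmetric])
    show "\<exists>k. real k \<le> C * M \<and> stop_cond \<epsilon>g \<epsilon>H (G k) (H k)" 
    proof (rule ccontr)
      assume no: "\<not> ?thesis"
      have C0: "C \<ge> 1" using Lc0 d0 rho0 by (simp add: C_def)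
      define k0 where "k0 = nat \<lfloor>C * M\<rfloor> + 1"
      have "\<forall>j<k0. \<not> stop_cond \<epsilon>g \<epsilon>H (G j) (H j)"
      proof (intro allI impI)
        fix j assume "j < k0"
        hence "j \<le> nat \<lfloor>C * M\<rfloor>" by (simp add: k0_def)
        hence "real j \<le> real (nat \<lfloor>C * M\<rfloor>)" by simp
        also have "\<dots> = of_int \<lfloor>C * M\<rfloor>" using C0 M1 by simp
        also have "\<dots> \<le> C * M" by (rule of_int_floor_le)
        finally have "real j \<le> C * M" .
        thus "\<not> stop_cond \<epsilon>g \<epsilon>H (G j) (H j)" using no by blast
      qed
      from inv[OF this] have sk0: "0 < \<sigma> k0" "\<sigma> k0 \<le> smax" and Pk: "\<Psi> k0 \<le> \<Psi> 0 - real k0" by auto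
      have "log \<gamma> (\<sigma> k0) \<le> log \<gamma> smax" using sk0 gam smax0 by simp
      moreover have "2 * favg fs n xm / (\<rho>TH * D) \<le> 2 * favg fs n (x k0) / (\<rho>TH * D)"
        using xm[of "x k0"] rho0 D0 by (intro divide_right_mono) auto
      ultimately have "real k0 \<le> 2 * favg fs n (x 0) / (\<rho>TH * D) - 2 * favg fs n xm / (\<rho>TH * D) + Lc"
        using Pk unfolding \<Psi>_def Lc_def sig0 by linarith
      also have "\<dots> = 2 * (favg fs n (x 0) - favg fs n xm) / \<rho>TH * (1 / D) + Lc"
        by (simp add: field_simps diff_divide_distrib)
      also have "\<dots> \<le> 2 * \<bar>\<Delta>\<bar> / \<rho>TH * (1 / D) + Lc"
        using xmD xm[of "x 0"] rho0 D0 by (intro add_right_mono mult_right_mono divide_right_mono) auto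
      also have "\<dots> = (2 * \<bar>\<Delta>\<bar> / (\<rho>TH * d)) * M + Lc" unfolding DM by simp
      also have "\<dots> \<le> (2 * \<bar>\<Delta>\<bar> / (\<rho>TH * d)) * M + Lc * M" using Lc0 M1
        by (simp add: mult_le_cancel_left1)
      also have "\<dots> = (C - 1) * M" by (simp add: C_def algebra_simps)
      also have "\<dots> \<le> C * M - 1" using M1 by (simp add: algebra_simps)
      finally have "real k0 \<le> C * M - 1" .
      moreover have "C * M < real k0"
      proof -
        have "real (nat \<lfloor>C * M\<rfloor>) = of_int \<lfloor>C * M\<rfloor>" using C0 M1 by simp
        moreover have "C * M < of_int \<lfloor>C * M\<rfloor> + 1" by (rule real_of_int_floor_add_one_gt)
        moreover have "real k0 = real (nat \<lfloor>C * M\<rfloor>) + 1" by (simp add: k0_def)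
        ultimately show ?thesis by linarith
      qed
      ultimately show False by linarith
    qed
  qed
qed


end
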